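(* Let $A$ be an integral domain with quotient field $K$, so that $\mathrm{reg}(A) = A\setminus\{0\}$. Then the following are equivalent: (a) $A$ is Egyptian. (b) $A$ is the only $\mathrm{reg}(A)$-regular $\mathrm{reg}(A)$-factroid of $A$ containing $1$. (c) $K$ is the only $\mathrm{reg}(A)$-factroid of $K$ (viewed as an $A$-module) containing $1$. More generally, the Egyptian elements of $A$ (resp., $K$) are precisely the elements of the smallest $\mathrm{reg}(A)$-regular $\mathrm{reg}(A)$-factroid $G^{\mathrm{reg}(A)}_A(1)$ of $A$ (resp., the smallest $\mathrm{reg}(A)$-factroid $[1]^{\mathrm{reg}(A)}_K$ of $K$) containing $1$.
   Context: For a subset $T$ of a ring $A$ and an $A$-module $M$, a $T$-factroid of $M$ is an additive subgroup $F$ of $M$ such that for all $x\in M$ and $t\in T$, $tx\in F$ implies $x\in F$; $[S]^T_M$ denotes the smallest $T$-factroid of $M$ containing $S\subseteq M$. For a multiplicative set $W$ and $T\subseteq A$, a $W$-factroid $F$ of $M$ is $T$-regular if for all $h\in T$ and $x\in M$, $hx\in[hF]^W_M$ implies $x\in F$ (where $hF=\{hy\mid y\in F\}$). $G^{W}_A(1):=\{a\in A\mid ha\in[h]^W_A \text{ for some } h\in W\}$. $\mathrm{reg}(A)$ is the set of nonzerodivisors of $A$. The reciprocal complement $R(A)$ is the set of all finite sums $\frac{1}{d_1}+\cdots+\frac{1}{d_n}\in K$ with $d_i\in A\setminus\{0\}$; an element of $K$ is Egyptian if it lies in $R(A)$, an element $a\in A$ is Egyptian if $a\in R(A)$, and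 $A$ is Egyptian if every element of $A$ (equivalently of $K$) is Egyptian. *)

theory Defs
  imports "HOL-Computational_Algebra.Fraction_Field"
begin

text \<open>A-modules are given by a scalar action act of the ring on an abelian group.\<close>

definition add_subgroup :: "'m::ab_group_add set \<Rightarrow> bool" where
  "add_subgroup F \<longleftrightarrow> 0 \<in> F \<and> (\<forall>x\<in>F. \<forall>y\<in>F. x + y \<in> F) \<and> (\<forall>x\<in>F. - x \<in> F)"

definition factroid :: "('a \<Rightarrow> 'm \<Rightarrow> 'm) \<Rightarrow> 'a set \<Rightarrow> 'm::ab_group_add set \<Rightarrow> bool" where
  "factroid act T F \<longleftrightarrow> add_subgroup F \<and> (\<forall>x t. t \<in> T \<longrightarrow> act t x \<in> F \<longrightarrow> x \<in> F)"

definition factroid_gen :: "('a \<Rightarrow> 'm \<Rightarrow> 'm) \<Rightarrow> 'a set \<Rightarrow> 'm::ab_group_add set \<Rightarrow> 'm set" where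
  "factroid_gen act T S = \<Inter>{F. factroid act T F \<and> S \<subseteq> F}"

definition factroid_regular :: "('a \<Rightarrow> 'm \<Rightarrow> 'm) \<Rightarrow> 'a set \<Rightarrow> 'a set \<Rightarrow> 'm::ab_group_add set \<Rightarrow> bool" where
  "factroid_regular act W T F \<longleftrightarrow>
     (\<forall>h\<in>T. \<forall>x. act h x \<in> factroid_gen act W (act h ` F) \<longrightarrow> x \<in> F)"

definition G_one :: "'a set \<Rightarrow> 'a::comm_ring_1 set" where
  "G_one W = {a. \<exists>h\<in>W. h * a \<in> factroid_gen (*) W {h}}"

definition reg :: "'a::comm_ring_1 set" where
  "reg = {a. \<forall>b. a * b = 0 \<longrightarrow> b = 0}"

definition emb :: "'a::idom \<Rightarrow> 'a fract" where
  "emb a = Fract a 1"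

definition recip_compl :: "'a::idom fract set" where
  "recip_compl = {x. \<exists>ds. (\<forall>d\<in>set ds. d \<noteq> 0) \<and>
                         x = sum_list (map (\<lambda>d. inverse (emb d)) ds)}"

definition egyptian_domain :: "'a::idom itself \<Rightarrow> bool" where
  "egyptian_domain _ \<longleftrightarrow> (\<forall>a::'a. emb a \<in> recip_compl)"

end

theory Submission
  imports Defs
begin

lemma reg_eq: "(reg::'a::idom set) = {a. a \<noteq> 0}"
  unfolding reg_def by (auto, metis mult_zero_left one_neq_zero)

lemma emb_mult: "emb (a*b) = emb a * emb b" by (simp add: emb_def)
lemma emb_add: "emb (a+b) = emb a + emb b" by (simp add: emb_def)
lemma emb_minus: "emb (-a) = - emb a" by (simp add: emb_def)
lemma emb_0: "emb 0 = 0" by (simp add: emb_def Zero_fract_def)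
lemma emb_1: "emb 1 = 1" by (simp add: emb_def One_fract_def)
lemma emb_inj: "emb (a::'a::idom) = emb b \<longleftrightarrow> a = b" by (simp add: emb_def eq_fract)
lemma emb_eq_0: "emb (a::'a::idom) = 0 \<longleftrightarrow> a = 0"
  using emb_inj[of a 0] by (simp add: emb_0)

lemma factroid_gen_factroid: "factroid act T (factroid_gen act T S)"
  unfolding factroid_def add_subgroup_def
proof (intro conjI ballI allI impI)
  show "0 \<in> factroid_gen act T S"
    unfolding factroid_gen_def factroid_def add_subgroup_def by blast
  show "x + y \<in> factroid_gen act T S" if "x \<in> factroid_gen act T S" "y \<in> factroid_gen act T S" for x y
    using that unfolding factroid_gen_def factroid_def add_subgroup_def by blast
  show "- x \<in> factroid_gen act T S" if "x \<in> factroid_gen act T S" for x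
    using that unfolding factroid_gen_def factroid_def add_subgroup_def by blast
  show "x \<in> factroid_gen act T S" if "t \<in> T" "act t x \<in> factroid_gen act T S" for x t
    using that unfolding factroid_gen_def factroid_def add_subgroup_def by blast
qed

lemma factroid_gen_sub: "S \<subseteq> factroid_gen act T S"
  unfolding factroid_gen_def by auto

lemma factroid_gen_least: "factroid act T F \<Longrightarrow> S \<subseteq> F \<Longrightarrow> factroid_gen act T S \<subseteq> F"
  unfolding factroid_gen_def by auto

lemma R_subgroup: "add_subgroup (recip_compl :: 'a::idom fract set)"
  unfolding add_subgroup_def
proof (intro conjI ballI)
  show "0 \<in> (recip_compl :: 'a fract set)" unfolding recip_compl_def
    by (rule CollectI, rule exI[of _ "[]"]) simp
next
  fix x y :: "'a fract" assume "x \<in> recip_compl" "y \<in> recip_compl"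
  then obtain ds es where "\<forall>d\<in>set ds. d \<noteq> 0" "x = sum_list (map (\<lambda>d. inverse (emb d)) ds)"
    "\<forall>d\<in>set es. d \<noteq> 0" "y = sum_list (map (\<lambda>d. inverse (emb d)) es)"
    unfolding recip_compl_def by auto
  then show "x + y \<in> recip_compl" unfolding recip_compl_def
    by (intro CollectI exI[of _ "ds @ es"]) auto
next
  fix x :: "'a fract" assume "x \<in> recip_compl"
  then obtain ds where "\<forall>d\<in>set ds. d \<noteq> 0" "x = sum_list (map (\<lambda>d. inverse (emb d)) ds)"
    unfolding recip_compl_def by auto
  moreover have "- sum_list (map (\<lambda>d. inverse (emb d)) ds) = sum_list (map (\<lambda>d. inverse (emb d)) (map uminus ds))"
    for ds :: "'a list"
    by (induction ds) (auto simp: emb_minus)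
  ultimately show "- x \<in> recip_compl" unfolding recip_compl_def
    by (intro CollectI exI[of _ "map uminus ds"]) auto
qed

lemma R_one: "(1 :: 'a::idom fract) \<in> recip_compl"
  unfolding recip_compl_def by (rule CollectI, rule exI[of _ "[1]"]) (simp add: emb_1)

lemma R_factroid: "factroid (\<lambda>a x. emb a * x) (reg :: 'a::idom set) recip_compl"
  unfolding factroid_def
proof (intro conjI allI impI R_subgroup)
  fix x :: "'a fract" and t :: 'a
  assume t: "t \<in> reg" and "emb t * x \<in> recip_compl"
  then have t0: "t \<noteq> 0" by (simp add: reg_eq)
  obtain ds where ds: "\<forall>d\<in>set ds. d \<noteq> 0" "emb t * x = sum_list (map (\<lambda>d. inverse (emb d)) ds)"
    using \<open>emb t * x \<in> recip_compl\<close> unfolding recip_compl_def by auto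
  have e: "inverse (emb t) * sum_list (map (\<lambda>d. inverse (emb d)) ds) = sum_list (map (\<lambda>d. inverse (emb d)) (map ((*) t) ds))"
    by (induction ds) (auto simp: emb_mult algebra_simps)
  have "x = inverse (emb t) * (emb t * x)" using t0 by (simp add: emb_eq_0)
  also have "\<dots> = sum_list (map (\<lambda>d. inverse (emb d)) (map ((*) t) ds))" using ds(2) e by simp
  finally show "x \<in> recip_compl" unfolding recip_compl_def using ds(1) t0
    by (intro CollectI exI[of _ "map ((*) t) ds"]) auto
qed

lemma R_least:
  assumes F: "factroid (\<lambda>a x. emb a * x) (reg :: 'a::idom set) F" and one: "1 \<in> F"
  shows "recip_compl \<subseteq> F"
proof
  fix x :: "'a fract" assume "x \<in> recip_compl"
  then obtain ds where ds: "\<forall>d\<in>set ds. d \<noteq> 0" "x = sum_list (map (\<lambda>d. inverse (emb d)) ds)"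
    unfolding recip_compl_def by auto
  have "\<forall>d\<in>set ds. d \<noteq> 0 \<Longrightarrow> sum_list (map (\<lambda>d. inverse (emb d)) ds) \<in> F"
  proof (induction ds)
    case Nil then show ?case using F by (simp add: factroid_def add_subgroup_def)
  next
    case (Cons d ds)
    then have d0: "d \<noteq> 0" by simp
    have "emb d * inverse (emb d) \<in> F" using d0 one by (simp add: emb_eq_0)
    then have "inverse (emb d) \<in> F" using F d0 unfolding factroid_def by (auto simp: reg_eq)
    then show ?case using Cons F by (simp add: factroid_def add_subgroup_def)
  qed
  then show "x \<in> F" using ds by simp
qed

lemma R_gen: "(recip_compl :: 'a::idom fract set) = factroid_gen (\<lambda>a x. emb a * x) (reg :: 'a set) {1}"
proof
  show "recip_compl \<subseteq> factroid_gen (\<lambda>a x. emb a * x) (reg :: 'a set) {1}"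
    by (rule R_least[OF factroid_gen_factroid]) (use factroid_gen_sub in blast)
  show "factroid_gen (\<lambda>a x. emb a * x) (reg :: 'a set) {1} \<subseteq> recip_compl"
    by (rule factroid_gen_least[OF R_factroid]) (simp add: R_one)
qed

definition E :: "'a::idom set" where "E = {a. emb a \<in> recip_compl}"

lemma E_factroid: "factroid (*) reg (E :: 'a::idom set)"
  using R_subgroup[where 'a='a] R_factroid[where 'a='a]
  unfolding factroid_def add_subgroup_def E_def
  by (auto simp: emb_mult emb_add emb_minus emb_0)

lemma E_one: "1 \<in> E" by (simp add: E_def emb_1 R_one)

definition S :: "'a::idom \<Rightarrow> 'a set" where "S h = {y. emb y * inverse (emb h) \<in> recip_compl}"

lemma S_factroid: "factroid (*) reg (S h :: 'a::idom set)"
  using R_subgroup[where 'a='a] R_factroid[where 'a='a]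
  unfolding factroid_def add_subgroup_def S_def
  by (auto simp: emb_mult emb_add emb_minus emb_0 algebra_simps)

lemma S_mem: "(h::'a::idom) \<noteq> 0 \<Longrightarrow> h * a \<in> S h \<longleftrightarrow> a \<in> E"
proof -
  assume "h \<noteq> 0"
  then have "emb h \<noteq> 0" by (simp add: emb_eq_0)
  then have "emb h * emb a * inverse (emb h) = emb a" by (simp add: field_simps)
  then show ?thesis by (simp only: S_def E_def emb_mult mem_Collect_eq)
qed

lemma gen_sub_S: "(h::'a::idom) \<noteq> 0 \<Longrightarrow> F \<subseteq> E \<Longrightarrow> factroid_gen (*) reg ((*) h ` F) \<subseteq> S h"
  by (rule factroid_gen_least[OF S_factroid]) (auto simp: S_mem)

lemma G_sub_E: "G_one (reg :: 'a::idom set) \<subseteq> E"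
proof
  fix a :: 'a assume "a \<in> G_one reg"
  then obtain h where h: "h \<noteq> 0" "h * a \<in> factroid_gen (*) reg {h}"
    unfolding G_one_def by (auto simp: reg_eq)
  have "{h} = (*) h ` {1}" by simp
  then have "factroid_gen (*) reg {h} \<subseteq> S h" using gen_sub_S[OF h(1), of "{1}"] E_one by simp
  then show "a \<in> E" using h S_mem by blast
qed

lemma scale_factroid: "factroid (*) reg (F::'a::idom set) \<Longrightarrow> factroid (*) reg {z. c * z \<in> F}"
  unfolding factroid_def add_subgroup_def by (auto simp: algebra_simps)

lemma key: "\<forall>d\<in>set ds. d \<noteq> 0 \<Longrightarrow> \<exists>h y. (h::'a::idom) \<noteq> 0 \<and>
   emb y = emb h * sum_list (map (\<lambda>d. inverse (emb d)) ds) \<and> y \<in> factroid_gen (*) reg {h}"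
proof (induction ds)
  case Nil
  have "0 \<in> factroid_gen (*) reg {1::'a}"
    using factroid_gen_factroid[of "(*)" reg "{1::'a}"] by (simp add: factroid_def add_subgroup_def)
  then show ?case by (intro exI[of _ 1] exI[of _ 0]) (simp add: emb_0)
next
  case (Cons d ds)
  then obtain h y where hy: "h \<noteq> 0" "emb y = emb h * sum_list (map (\<lambda>d. inverse (emb d)) ds)"
    "y \<in> factroid_gen (*) reg {h}" by auto
  have d0: "d \<noteq> 0" using Cons by simp
  let ?G = "factroid_gen (*) reg {d*h}"
  have G: "factroid (*) reg ?G" by (rule factroid_gen_factroid)
  have "d * h \<in> ?G" using factroid_gen_sub by blast
  then have h1: "h \<in> ?G" using G d0 unfolding factroid_def by (auto simp: reg_eq)
  have "factroid_gen (*) reg {h} \<subseteq> {z. d * z \<in> ?G}"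
    by (rule factroid_gen_least[OF scale_factroid[OF G]]) (use \<open>d * h \<in> ?G\<close> in simp)
  then have h2: "d * y \<in> ?G" using hy(3) by auto
  have "h + d * y \<in> ?G" using h1 h2 G by (simp add: factroid_def add_subgroup_def)
  moreover have "emb (h + d * y) = emb (d * h) * sum_list (map (\<lambda>d. inverse (emb d)) (d # ds))"
    using d0 hy(2) by (simp add: emb_add emb_mult emb_eq_0 field_simps)
  ultimately show ?case using d0 hy(1) by (intro exI[of _ "d*h"] exI[of _ "h + d*y"]) simp
qed

lemma E_sub_G: "E \<subseteq> G_one (reg :: 'a::idom set)"
proof
  fix a :: 'a assume "a \<in> E"
  then obtain ds where ds: "\<forall>d\<in>set ds. d \<noteq> 0" "emb a = sum_list (map (\<lambda>d. inverse (emb d)) ds)"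
    unfolding E_def recip_compl_def by auto
  obtain h y where "h \<noteq> 0" "emb y = emb h * emb a" "y \<in> factroid_gen (*) reg {h}"
    using key[OF ds(1)] ds(2) by auto
  then have "y = h * a" by (simp add: emb_mult[symmetric] emb_inj)
  then show "a \<in> G_one reg" unfolding G_one_def
    using \<open>h \<noteq> 0\<close> \<open>y \<in> _\<close> by (auto simp: reg_eq)
qed

lemma G_eq_E: "G_one (reg :: 'a::idom set) = E"
  using G_sub_E E_sub_G by blast

lemma E_regular: "factroid_regular (*) reg reg (E :: 'a::idom set)"
  unfolding factroid_regular_def
proof (intro ballI allI impI)
  fix h x :: 'a assume h: "h \<in> reg" and hx: "h * x \<in> factroid_gen (*) reg ((*) h ` E)"
  then have h0: "h \<noteq> 0" by (simp add: reg_eq)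
  show "x \<in> E" using gen_sub_S[OF h0, of E] hx S_mem[OF h0] by blast
qed

lemma G_least:
  assumes F: "factroid (*) reg F" "factroid_regular (*) reg reg F" "1 \<in> F"
  shows "G_one (reg :: 'a::idom set) \<subseteq> F"
proof
  fix a :: 'a assume "a \<in> G_one reg"
  then obtain h where h: "h \<in> reg" "h * a \<in> factroid_gen (*) reg {h}"
    unfolding G_one_def by auto
  have "{h} \<subseteq> factroid_gen (*) reg ((*) h ` F)"
    using F(3) factroid_gen_sub[of "(*) h ` F" "(*)" reg] by force
  then have "factroid_gen (*) reg {h} \<subseteq> factroid_gen (*) reg ((*) h ` F)"
    by (rule factroid_gen_least[OF factroid_gen_factroid])
  then show "a \<in> F" using F(2) h unfolding factroid_regular_def by blast
qed

lemma egy_E: "egyptian_domain TYPE('a::idom) \<longleftrightarrow> (E :: 'a set) = UNIV"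
  by (auto simp: egyptian_domain_def E_def)

lemma egy_R: "egyptian_domain TYPE('a::idom) \<longleftrightarrow> (recip_compl :: 'a fract set) = UNIV"
proof
  assume eg: "egyptian_domain TYPE('a)"
  have "x \<in> recip_compl" for x :: "'a fract"
  proof (cases x)
    case (Fract a b)
    then have "emb b * x = emb a" using mult_fract_cancel[of b a 1] by (simp add: emb_def)
    moreover have "emb a \<in> recip_compl" using eg by (simp add: egyptian_domain_def)
    ultimately show ?thesis using R_factroid[where 'a='a] Fract(2) unfolding factroid_def
      by (auto simp: reg_eq)
  qed
  then show "(recip_compl :: 'a fract set) = UNIV" by auto
qed (auto simp: egyptian_domain_def)

theorem corollary7p11:
  fixes TYPE_A :: "'a::idom itself"
  shows "(egyptian_domain TYPE('a) \<longleftrightarrow>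
            {F :: 'a set. factroid (*) reg F \<and> factroid_regular (*) reg reg F \<and> 1 \<in> F} = {UNIV})
       \<and> (egyptian_domain TYPE('a) \<longleftrightarrow>
            {F :: 'a fract set. factroid (\<lambda>a x. emb a * x) (reg :: 'a set) F \<and> 1 \<in> F} = {UNIV})
       \<and> G_one (reg :: 'a set) \<in> {F. factroid (*) reg F \<and> factroid_regular (*) reg reg F \<and> 1 \<in> F}
       \<and> (\<forall>F. factroid (*) reg F \<and> factroid_regular (*) reg reg F \<and> 1 \<in> F \<longrightarrow> G_one (reg :: 'a set) \<subseteq> F)
       \<and> {a :: 'a. emb a \<in> recip_compl} = G_one reg
       \<and> (recip_compl :: 'a fract set) = factroid_gen (\<lambda>a x. emb a * x) (reg :: 'a set) {1}"
proof -
  have Gin: "G_one (reg :: 'a set) \<in> {F. factroid (*) reg F \<and> factroid_regular (*) reg reg F \<and> 1 \<in> F}"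
    using G_eq_E E_factroid E_regular E_one by auto
  have Gl: "\<forall>F. factroid (*) reg F \<and> factroid_regular (*) reg reg F \<and> 1 \<in> F \<longrightarrow> G_one (reg :: 'a set) \<subseteq> F"
    using G_least by blast
  have univA: "factroid (*) reg (UNIV::'a set) \<and> factroid_regular (*) reg reg (UNIV::'a set)"
    by (simp add: factroid_def add_subgroup_def factroid_regular_def)
  have univK: "factroid (\<lambda>a x. emb a * x) (reg :: 'a set) (UNIV::'a fract set)"
    by (simp add: factroid_def add_subgroup_def)
  have c1: "egyptian_domain TYPE('a) \<longleftrightarrow>
            {F :: 'a set. factroid (*) reg F \<and> factroid_regular (*) reg reg F \<and> 1 \<in> F} = {UNIV}"
  proof
    assume "egyptian_domain TYPE('a)"
    then have "G_one (reg :: 'a set) = UNIV" using egy_E G_eq_E by metis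
    then show "{F :: 'a set. factroid (*) reg F \<and> factroid_regular (*) reg reg F \<and> 1 \<in> F} = {UNIV}"
      using Gl univA by blast
  next
    assume "{F :: 'a set. factroid (*) reg F \<and> factroid_regular (*) reg reg F \<and> 1 \<in> F} = {UNIV}"
    then have "G_one (reg :: 'a set) = UNIV" using Gin by blast
    then show "egyptian_domain TYPE('a)" using egy_E G_eq_E by metis
  qed
  have c2: "egyptian_domain TYPE('a) \<longleftrightarrow>
            {F :: 'a fract set. factroid (\<lambda>a x. emb a * x) (reg :: 'a set) F \<and> 1 \<in> F} = {UNIV}"
  proof
    assume "egyptian_domain TYPE('a)"
    then have "(recip_compl :: 'a fract set) = UNIV" using egy_R by blast
    then show "{F :: 'a fract set. factroid (\<lambda>a x. emb a * x) (reg :: 'a set) F \<and> 1 \<in> F} = {UNIV}"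
      using R_least[where 'a='a] univK by blast
  next
    assume "{F :: 'a fract set. factroid (\<lambda>a x. emb a * x) (reg :: 'a set) F \<and> 1 \<in> F} = {UNIV}"
    then have "(recip_compl :: 'a fract set) = UNIV" using R_factroid[where 'a='a] R_one[where 'a='a] by blast
    then show "egyptian_domain TYPE('a)" using egy_R by blast
  qed
  have c5: "{a :: 'a. emb a \<in> recip_compl} = G_one reg" using G_eq_E[symmetric] by (simp add: E_def)
  show ?thesis using c1 c2 Gin Gl c5 R_gen by blast
qed

end
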